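(* Let $t>0$, $0<t_{sc}<t$, $t_{ave}>0$, $c>0$, $d\in(0,1)$, and let $\Gamma:[0,1]\to(0,\infty)$ satisfy $\Gamma(d)>c$. Let $\eta$, $\zeta$ and $\Delta\pi$ be the transmission efficiency, service integrity and cooperation margin defined in the context. Then $$\Delta\pi=1-\frac{d}{(1-\zeta)\,(1-c/\Gamma(d))},$$ $$\Delta\pi=1-\frac{1-(1-d)\exp\!\left(-\frac{t_{sc}}{t_{ave}}\frac{1}{1-\eta}\right)}{1-c/\Gamma(d)},$$ $$\zeta=1-\frac{d}{1-(1-d)\exp\!\left(-\frac{t_{sc}}{t_{ave}}\frac{1}{1-\eta}\right)}.$$
   Context: The transmission efficiency is $\eta=1-t_{sc}/t$. Service integrity: the service duration $T$ is exponentially distributed with mean $t_{ave}$, and the number of rounds is $M=\lceil T/t\rceil$. The service integrity is $$\zeta=\sum_{m=1}^\infty(1-d)^m\Pr(M=m).$$ Cooperation margin: - The continuation probability is $w=\exp(-t/t_{ave})$. - The trial time $\tau\in(0,t)$ and price $p$ satisfy $p=\Gamma(d)(1-\tau/t)+\frac{c}{1-d}\frac{\tau}{t}$. - The SP's long-term payoffs against a cooperating client are $$\Pi_s^{\mathrm{C}}=\frac{(1-d)(p-c)t-dc\tau}{1-(1-d)w}$$ when the SP cooperates, and $$\Pi_s^{\mathrm{D}}=(1-d)pt-c\tau$$ when the SP always defects. - The cooperation margin is $\Delta\pi=1-\Pi_s^{\mathrm D}/\Pi_s^{\mathrm C}$. *)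

theory Defs
  imports "HOL-Probability.Probability"
begin

definition trans_eff :: "real \<Rightarrow> real \<Rightarrow> real" where
  "trans_eff t_sc t = 1 - t_sc / t"

text \<open>Service integrity: T a random variable on probability space Om (service duration),
  M = ceiling (T / t) the number of rounds, zeta = sum over m >= 1 of (1-d)^m Pr(M = m).\<close>
definition service_integrity :: "'a measure \<Rightarrow> ('a \<Rightarrow> real) \<Rightarrow> real \<Rightarrow> real \<Rightarrow> real" where
  "service_integrity Om T t d =
     (\<Sum>k. (1 - d) ^ (Suc k) * measure Om {\<omega> \<in> space Om. \<lceil>T \<omega> / t\<rceil> = int (Suc k)})"

definition cont_prob :: "real \<Rightarrow> real \<Rightarrow> real" where
  "cont_prob t t_ave = exp (- t / t_ave)"

definition payoff_C :: "real \<Rightarrow> real \<Rightarrow> real \<Rightarrow> real \<Rightarrow> real \<Rightarrow> real \<Rightarrow> real" where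
  "payoff_C d p c t \<tau> w = ((1 - d) * (p - c) * t - d * c * \<tau>) / (1 - (1 - d) * w)"

definition payoff_D :: "real \<Rightarrow> real \<Rightarrow> real \<Rightarrow> real \<Rightarrow> real \<Rightarrow> real" where
  "payoff_D d p c t \<tau> = (1 - d) * p * t - c * \<tau>"

definition coop_margin :: "real \<Rightarrow> real \<Rightarrow> real \<Rightarrow> real \<Rightarrow> real \<Rightarrow> real \<Rightarrow> real" where
  "coop_margin d p c t \<tau> t_ave =
     1 - payoff_D d p c t \<tau> / payoff_C d p c t \<tau> (cont_prob t t_ave)"

end

theory Submission
  imports Defs
begin

lemma prob_ceil:
  fixes t l :: real and T :: "'a \<Rightarrow> real" and Om :: "'a measure"
  assumes P: "prob_space Om" and D: "distributed Om lborel T (exponential_density l)"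
    and t: "t > 0" and l: "l > 0"
  shows "measure Om {\<omega> \<in> space Om. \<lceil>T \<omega> / t\<rceil> = int (Suc k)}
         = exp (- t * l) ^ k - exp (- t * l) ^ Suc k"
proof -
  interpret prob_space Om by (rule P)
  have Tm[measurable]: "T \<in> borel_measurable Om" using distributed_measurable[OF D] by simp
  define A where "A = {\<omega> \<in> space Om. real k * t < T \<omega>}"
  define B where "B = {\<omega> \<in> space Om. real (Suc k) * t < T \<omega>}"
  have eq: "{\<omega> \<in> space Om. \<lceil>T \<omega> / t\<rceil> = int (Suc k)} = A - B"
  proof -
    have "\<lceil>x / t\<rceil> = int (Suc k) \<longleftrightarrow> real k * t < x \<and> \<not> real (Suc k) * t < x" for x
    proof -
      have "\<lceil>x / t\<rceil> = int (Suc k) \<longleftrightarrow> real (Suc k) - 1 < x / t \<and> x / t \<le> real (Suc k)"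
        by (simp add: ceiling_eq_iff)
      also have "\<dots> \<longleftrightarrow> real k * t < x \<and> \<not> real (Suc k) * t < x"
        using t by (simp add: field_simps not_less)
      finally show ?thesis .
    qed
    then show ?thesis unfolding A_def B_def by auto
  qed
  have Am: "A \<in> events" unfolding A_def by measurable
  have Bm: "B \<in> events" unfolding B_def by measurable
  have BA: "B \<subseteq> A" unfolding A_def B_def using t
    by auto (smt (verit, ccfv_SIG) mult_right_mono of_nat_0_le_iff)
  have mA: "prob A = exp (- (real k * t) * l)"
    unfolding A_def using exponential_distributedD_gt[OF D _ l, of "real k * t"] t by simp
  have mB: "prob B = exp (- (real (Suc k) * t) * l)"
    unfolding B_def using exponential_distributedD_gt[OF D _ l, of "real (Suc k) * t"] t by simp
  have "prob (A - B) = prob A - prob B" using finite_measure_Diff[OF Am Bm BA] .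
  also have "\<dots> = exp (- t * l) ^ k - exp (- t * l) ^ Suc k"
    unfolding mA mB by (simp add: exp_of_nat_mult[symmetric] mult_exp_exp algebra_simps)
  finally show ?thesis using eq by simp
qed

theorem theorem4:
  fixes t t_sc t_ave c d \<tau> p :: real
    and \<Gamma> :: "real \<Rightarrow> real"
    and Om :: "'a measure" and T :: "'a \<Rightarrow> real"
  assumes "t > 0" and "0 < t_sc" and "t_sc < t" and "t_ave > 0" and "c > 0"
    and "0 < d" and "d < 1"
    and "\<forall>x \<in> {0..1}. \<Gamma> x > 0" and "\<Gamma> d > c"
    and "prob_space Om"
    and "distributed Om lborel T (exponential_density (1 / t_ave))"
    and "0 < \<tau>" and "\<tau> < t"
    and "p = \<Gamma> d * (1 - \<tau> / t) + c / (1 - d) * (\<tau> / t)"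
  shows "coop_margin d p c t \<tau> t_ave
           = 1 - d / ((1 - service_integrity Om T t d) * (1 - c / \<Gamma> d)) \<and>
         coop_margin d p c t \<tau> t_ave
           = 1 - (1 - (1 - d) * exp (- (t_sc / t_ave) * (1 / (1 - trans_eff t_sc t))))
                 / (1 - c / \<Gamma> d) \<and>
         service_integrity Om T t d
           = 1 - d / (1 - (1 - d) * exp (- (t_sc / t_ave) * (1 / (1 - trans_eff t_sc t))))"
proof -
  define w where "w = exp (- t / t_ave)"
  have w0: "0 < w" and w1: "w < 1" using assms unfolding w_def by auto
  have ex: "exp (- (t_sc / t_ave) * (1 / (1 - trans_eff t_sc t))) = w"
    unfolding w_def trans_eff_def using assms by (simp add: field_simps)
  have pm: "measure Om {\<omega> \<in> space Om. \<lceil>T \<omega> / t\<rceil> = int (Suc k)} = w ^ k - w ^ Suc k" for k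
    using prob_ceil[OF assms(10) assms(11) assms(1), of k] assms unfolding w_def
    by (simp add: field_simps)
  have q0: "0 < (1 - d) * w" using assms w0 by simp
  have q1: "(1 - d) * w < 1"
  proof -
    have "(1 - d) * w < (1 - d) * 1" using w1 assms by (intro mult_strict_left_mono) auto
    then show ?thesis using assms by (smt (verit))
  qed
  have q: "norm ((1 - d) * w) < 1" using q0 q1 by simp
  have "(\<lambda>k. ((1 - d) * (1 - w)) * ((1 - d) * w) ^ k) sums (((1 - d) * (1 - w)) * (1 / (1 - (1 - d) * w)))"
    by (rule sums_mult[OF geometric_sums[OF q]])
  moreover have "(\<lambda>k. ((1 - d) * (1 - w)) * ((1 - d) * w) ^ k)
      = (\<lambda>k. (1 - d) ^ (Suc k) * measure Om {\<omega> \<in> space Om. \<lceil>T \<omega> / t\<rceil> = int (Suc k)})"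
    apply (rule ext) apply (simp only: pm power_mult_distrib power_Suc) by (simp add: algebra_simps)
  ultimately have si: "service_integrity Om T t d = (1 - d) * (1 - w) / (1 - (1 - d) * w)"
    unfolding service_integrity_def by (simp add: sums_unique[symmetric])
  have den: "1 - (1 - d) * w > 0" using q1 by linarith
  have si2: "service_integrity Om T t d = 1 - d / (1 - (1 - d) * w)"
    unfolding si using den by (simp add: field_simps)
  have g: "\<Gamma> d > 0" using assms by linarith
  have cm: "coop_margin d p c t \<tau> t_ave = 1 - (1 - (1 - d) * w) / (1 - c / \<Gamma> d)"
  proof -
    have h: "(1 - d) * p * t = \<Gamma> d * (1 - d) * (t - \<tau>) + c * \<tau>"
      unfolding assms(14) using assms by (simp add: field_simps)
    have "(1 - d) * (p - c) * t - d * c * \<tau> = (1 - d) * p * t - (1 - d) * c * t - d * c * \<tau>"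
      by (simp add: algebra_simps)
    also have "\<dots> = \<Gamma> d * (1 - d) * (t - \<tau>) + c * \<tau> - (1 - d) * c * t - d * c * \<tau>"
      using h by simp
    also have "\<dots> = (1 - d) * (t - \<tau>) * (\<Gamma> d - c)" by (simp add: algebra_simps)
    finally have num: "(1 - d) * (p - c) * t - d * c * \<tau> = (1 - d) * (t - \<tau>) * (\<Gamma> d - c)" .
    have PC: "payoff_C d p c t \<tau> w = (1 - d) * (t - \<tau>) * (\<Gamma> d - c) / (1 - (1 - d) * w)"
      unfolding payoff_C_def num ..
    have PD: "payoff_D d p c t \<tau> = \<Gamma> d * (1 - d) * (t - \<tau>)"
      unfolding payoff_D_def using h by simp
    have "payoff_D d p c t \<tau> / payoff_C d p c t \<tau> w = (1 - (1 - d) * w) / (1 - c / \<Gamma> d)"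
    proof -
      define K where "K = (1 - d) * (t - \<tau>)"
      define D where "D = 1 - (1 - d) * w"
      have K: "K \<noteq> 0" unfolding K_def using assms by simp
      have D: "D \<noteq> 0" unfolding D_def using den by simp
      have G: "\<Gamma> d - c \<noteq> 0" using assms by simp
      have "payoff_D d p c t \<tau> / payoff_C d p c t \<tau> w = (\<Gamma> d * K) / (K * (\<Gamma> d - c) / D)"
        unfolding PC PD K_def D_def by (simp add: mult.assoc)
      also have "\<dots> = \<Gamma> d * D / (\<Gamma> d - c)" using K D G by (simp add: field_simps)
      also have "\<dots> = D / (1 - c / \<Gamma> d)" using g G by (simp add: field_simps)
      finally show ?thesis unfolding D_def .
    qed
    then show ?thesis unfolding coop_margin_def w_def[symmetric] cont_prob_def by simp
  qed
  have "d / (1 - service_integrity Om T t d) = 1 - (1 - d) * w"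
    unfolding si2 using den assms by (simp add: field_simps)
  then have "d / ((1 - service_integrity Om T t d) * (1 - c / \<Gamma> d)) = (1 - (1 - d) * w) / (1 - c / \<Gamma> d)"
    by (metis divide_divide_eq_left)
  then show ?thesis using cm si2 ex by simp
qed

end
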